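(* Let $q=\{q_n\}_{n\geq1}$ be an (infinite) system of Beurling primes with $q_1>1$ and $\sigma_c(\zeta_q)<\infty$. Then for every $A>0$ there exists a system of Beurling primes $\tilde q=\{\tilde q_n\}_{n\geq1}$ such that $$|q_n-\tilde q_n|\leq q_n^{-A},\qquad n\in\mathbb{N},$$ and the Beurling integers $\{\tilde\nu_n\}_{n\geq1}$ generated by $\tilde q$ satisfy Bohr's condition: there exist $c_1,c_2>0$ with $\tilde\nu_{n+1}-\tilde\nu_n\geq c_1\tilde\nu_{n+1}^{-c_2}$ for all $n\in\mathbb{N}$.
   Context: A system of Beurling primes is an increasing sequence $q=\{q_n\}$ of real numbers with $1<q_n\to\infty$ such that $\{\log q_n\}$ is linearly independent over $\mathbb{Q}$. The Beurling integers are all finite products of elements of $q$ (including $1$), listed in increasing order as $\nu_1<\nu_2<\cdots$. $\zeta_q(s)=\sum_{n\geq1}\nu_n^{-s}$ and $\sigma_c(\zeta_q)$ is its abscissa of convergence. *)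

theory Defs
  imports "HOL-Analysis.Analysis"
begin

text \<open>A system of Beurling primes, indexed from 0 (q 0 is the paper's q_1).\<close>
definition beurling_primes :: "(nat \<Rightarrow> real) \<Rightarrow> bool" where
  "beurling_primes q \<longleftrightarrow>
     strict_mono q \<and> (\<forall>n. 1 < q n) \<and> filterlim q at_top sequentially \<and>
     (\<forall>F (c :: nat \<Rightarrow> rat). finite F \<longrightarrow>
        (\<Sum>i\<in>F. of_rat (c i) * ln (q i)) = 0 \<longrightarrow> (\<forall>i\<in>F. c i = 0))"

definition beurling_integers :: "(nat \<Rightarrow> real) \<Rightarrow> real set" where
  "beurling_integers q =
     {(\<Prod>i\<in>{i. e i \<noteq> 0}. q i ^ e i) | e :: nat \<Rightarrow> nat. finite {i. e i \<noteq> 0}}"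

text \<open>The Beurling integers listed in increasing order (nu q 0 is the paper's nu_1).\<close>
definition beurling_nu :: "(nat \<Rightarrow> real) \<Rightarrow> nat \<Rightarrow> real" where
  "beurling_nu q = (SOME f. strict_mono f \<and> range f = beurling_integers q)"

text \<open>sigma_c(zeta_q) < infinity: the Dirichlet series with positive terms converges
  for some (real) s.\<close>
definition abscissa_finite :: "(nat \<Rightarrow> real) \<Rightarrow> bool" where
  "abscissa_finite q \<longleftrightarrow> (\<exists>s::real. summable (\<lambda>n. beurling_nu q n powr (- s)))"

end

theory Submission imports Defs "HOL-Number_Theory.Prime_Powers" begin

lemma Suc_div_split:
  assumes "d > 0"
  shows "Suc n div d = n div d + (if d dvd Suc n then 1 else 0)"
  using assms by (simp add: div_Suc dvd_eq_mod_eq_0)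

lemma ln_fact_mangoldt:
  "ln (fact n :: real) = (\<Sum>d\<in>{1..n}. mangoldt d * real (n div d))"
proof (induction n)
  case 0
  then show ?case by simp
next
  case (Suc n)
  have "ln (fact (Suc n) :: real) = ln (real (Suc n)) + ln (fact n)"
    by (simp add: ln_mult fact_gt_zero del: of_nat_Suc)
  also have "ln (real (Suc n)) = (\<Sum>d | d dvd Suc n. mangoldt d)"
    using mangoldt_sum[of "Suc n", where 'a=real] by simp
  also have "(\<Sum>d | d dvd Suc n. mangoldt d) = (\<Sum>d\<in>{1..Suc n}. if d dvd Suc n then mangoldt d else (0::real))"
    by (rule sum.mono_neutral_cong_left) (auto simp: Suc_le_eq dvd_imp_le intro: dvd_pos_nat[of "Suc n"])
  finally have e1: "ln (fact (Suc n) :: real) = (\<Sum>d\<in>{1..Suc n}. if d dvd Suc n then mangoldt d else (0::real)) + ln (fact n)" .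
  have e2: "(\<Sum>d\<in>{1..n}. mangoldt d * real (n div d)) = (\<Sum>d\<in>{1..Suc n}. mangoldt d * real (n div d))"
    by (rule sum.mono_neutral_left) auto
  have "ln (fact (Suc n) :: real) = (\<Sum>d\<in>{1..Suc n}. (if d dvd Suc n then mangoldt d else 0) + mangoldt d * real (n div d))"
    using Suc e1 e2 by (simp add: sum.distrib)
  also have "\<dots> = (\<Sum>d\<in>{1..Suc n}. mangoldt d * real (Suc n div d))"
    by (rule sum.cong) (auto simp: Suc_div_split algebra_simps)
  finally show ?case .
qed

lemma two_div_bound: "(2*n) div d \<le> 2 * (n div d) + (1::nat)"
proof (cases "d = 0")
  case False
  have "(n + n) div d = n div d + n div d + (n mod d + n mod d) div d"
    by (rule div_add1_eq)
  moreover have "(n mod d + n mod d) div d \<le> 1"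
  proof -
    have "n mod d < d" using False by simp
    then have "n mod d + n mod d < 2 * d" by linarith
    then have "(n mod d + n mod d) div d < 2" by (rule less_mult_imp_div_less)
    then show ?thesis by simp
  qed
  ultimately show ?thesis by (simp add: mult_2)
qed simp

lemma ln_central_le_psi:
  "ln (real ((2*n) choose n)) \<le> (\<Sum>d\<in>{1..2*n}. mangoldt d)"
proof -
  have "real ((2*n) choose n) = fact (2*n) / (fact n * fact n)"
    by (simp add: binomial_fact)
  then have "ln (real ((2*n) choose n)) = ln (fact (2*n)) - 2 * ln (fact n :: real)"
    by (simp add: ln_div ln_mult fact_gt_zero)
  also have "ln (fact n :: real) = (\<Sum>d\<in>{1..2*n}. mangoldt d * real (n div d))"
    unfolding ln_fact_mangoldt by (rule sum.mono_neutral_left) auto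
  finally have "ln (real ((2*n) choose n)) = (\<Sum>d\<in>{1..2*n}. mangoldt d * (real ((2*n) div d) - 2 * real (n div d)))"
    by (simp add: ln_fact_mangoldt sum_subtractf sum_distrib_left algebra_simps)
  also have "\<dots> \<le> (\<Sum>d\<in>{1..2*n}. mangoldt d)"
  proof (rule sum_mono)
    fix d
    have "real ((2*n) div d) \<le> 2 * real (n div d) + 1"
      using two_div_bound[of n d] by linarith
    then show "mangoldt d * (real ((2*n) div d) - 2 * real (n div d)) \<le> mangoldt d"
      using mangoldt_nonneg[of d] by (simp add: mult_left_le)
  qed
  finally show ?thesis .
qed

lemma psi_le_card:
  assumes "finite S" and S: "\<And>p. prime p \<Longrightarrow> p \<le> M \<Longrightarrow> p \<in> S" and "M \<ge> 1"
  shows "(\<Sum>d\<in>{1..M}. mangoldt d) \<le> real (card S) * ln (real M)"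
proof -
  define K where "K = (\<lambda>p::nat. {k::nat. 1 \<le> k \<and> p ^ k \<le> M})"
  have finK: "finite (K p)" if "p \<ge> 2" for p
  proof -
    have "K p \<subseteq> {..M}"
    proof
      fix k assume "k \<in> K p"
      then have "p ^ k \<le> M" by (simp add: K_def)
      moreover have "k < p ^ k"
      proof -
        have "k < 2 ^ k" by (rule less_exp)
        also have "(2::nat) ^ k \<le> p ^ k" using that by (rule power_mono) simp
        finally show ?thesis .
      qed
      ultimately show "k \<in> {..M}" by simp
    qed
    then show ?thesis by (rule finite_subset) simp
  qed
  define Sp where "Sp = {p\<in>S. prime p}"
  have finSp: "finite Sp" using assms(1) by (simp add: Sp_def)
  define I where "I = (SIGMA p:Sp. K p)"
  have finI: "finite I" unfolding I_def using finSp finK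
    by (intro finite_SigmaI) (auto simp: Sp_def prime_ge_2_nat)
  have "(\<Sum>d\<in>{1..M}. mangoldt d) = (\<Sum>d\<in>{d\<in>{1..M}. primepow d}. mangoldt d :: real)"
    by (rule sum.mono_neutral_right) (auto simp: mangoldt_def)
  also have "\<dots> \<le> (\<Sum>d\<in>(\<lambda>(p,k). p ^ k) ` I. mangoldt d)"
  proof (rule sum_mono2)
    show "finite ((\<lambda>(p,k). p ^ k) ` I)" using finI by simp
    show "{d\<in>{1..M}. primepow d} \<subseteq> (\<lambda>(p,k). p ^ k) ` I"
    proof
      fix d assume d: "d \<in> {d\<in>{1..M}. primepow d}"
      then obtain p k where pk: "prime p" "k > 0" "d = p ^ k" by (auto simp: primepow_def)
      have "p \<le> d" using pk prime_ge_1_nat[of p] by (simp add: self_le_power)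
      then have "p \<in> Sp" using d pk S by (auto simp: Sp_def)
      moreover have "k \<in> K p" using d pk by (auto simp: K_def)
      ultimately show "d \<in> (\<lambda>(p,k). p ^ k) ` I" using pk by (auto simp: I_def)
    qed
  qed (simp add: mangoldt_nonneg)
  also have "\<dots> \<le> sum ((mangoldt :: nat \<Rightarrow> real) \<circ> (\<lambda>(p,k). p ^ k)) I"
    by (rule sum_image_le[OF finI]) (simp add: mangoldt_nonneg)
  also have "\<dots> = (\<Sum>(p,k)\<in>I. mangoldt (p ^ k))"
    by (simp add: o_def case_prod_unfold)
  also have "\<dots> = (\<Sum>p\<in>Sp. \<Sum>k\<in>K p. mangoldt (p ^ k))"
    unfolding I_def using finSp finK by (subst sum.Sigma) (auto simp: Sp_def prime_ge_2_nat)
  also have "\<dots> = (\<Sum>p\<in>Sp. real (card (K p)) * ln (real p))"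
    by (rule sum.cong) (auto simp: Sp_def K_def)
  also have "\<dots> \<le> (\<Sum>p\<in>Sp. ln (real M))"
  proof (rule sum_mono)
    fix p assume p: "p \<in> Sp"
    then have p2: "p \<ge> 2" by (simp add: Sp_def prime_ge_2_nat)
    have lp: "ln (real p) > 0" using p2 by simp
    have "K p \<subseteq> {1..nat \<lfloor>ln (real M) / ln (real p)\<rfloor>}"
    proof
      fix k assume k: "k \<in> K p"
      then have "real p ^ k \<le> real M" by (simp add: K_def flip: of_nat_power)
      then have "ln (real p ^ k) \<le> ln (real M)" using p2 assms(3) by (subst ln_le_cancel_iff) auto
      then have "real k * ln (real p) \<le> ln (real M)" using p2 by (simp add: ln_realpow)
      then have "real k \<le> ln (real M) / ln (real p)" using lp by (simp add: field_simps)
      then show "k \<in> {1..nat \<lfloor>ln (real M) / ln (real p)\<rfloor>}" using k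
        by (auto simp: K_def le_nat_floor)
    qed
    then have "card (K p) \<le> nat \<lfloor>ln (real M) / ln (real p)\<rfloor>"
      by (metis card_atLeastAtMost card_mono finite_atLeastAtMost diff_Suc_1)
    moreover have x0: "0 \<le> ln (real M) / ln (real p)" using lp assms(3) by simp
    moreover have "real (nat \<lfloor>ln (real M) / ln (real p)\<rfloor>) \<le> ln (real M) / ln (real p)"
      using x0 by (simp add: of_nat_nat)
    ultimately have "real (card (K p)) \<le> ln (real M) / ln (real p)"
      by (meson of_nat_le_iff order_trans)
    then show "real (card (K p)) * ln (real p) \<le> ln (real M)"
      using lp by (simp add: field_simps)
  qed
  also have "\<dots> = real (card Sp) * ln (real M)" by simp
  also have "\<dots> \<le> real (card S) * ln (real M)"
    using assms(1,3) by (intro mult_right_mono) (auto simp: Sp_def intro: card_mono)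
  finally show ?thesis .
qed

lemma exists_prime_avoiding:
  assumes "finite S" "y \<ge> 4" "(real (card S) + 1) * ln y < y / 2 * ln 2"
  shows "\<exists>p. prime p \<and> real p \<le> y \<and> p \<notin> S"
proof (rule ccontr)
  assume "\<not> ?thesis"
  then have allS: "\<And>p. prime p \<Longrightarrow> real p \<le> y \<Longrightarrow> p \<in> S" by blast
  define N where "N = nat \<lfloor>y / 2\<rfloor>"
  have N1: "real N \<ge> y / 2 - 1" unfolding N_def using assms(2) by linarith
  have N2: "real (2 * N) \<le> y" unfolding N_def using assms(2) by linarith
  have Npos: "N > 0" using N1 assms(2) by linarith
  have ps: "(\<Sum>d\<in>{1..2*N}. mangoldt d) \<le> real (card S) * ln (real (2*N))"
    by (rule psi_le_card[OF assms(1)]) (use allS N2 Npos in auto)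
  have cb: "4 ^ N / (2 * real N) \<le> real ((2*N) choose N)"
    by (rule central_binomial_lower_bound[OF Npos])
  have pos: "0 < 4 ^ N / (2 * real N)" using Npos by simp
  have "ln (4 ^ N / (2 * real N)) \<le> ln (real ((2*N) choose N))"
    using cb pos by (subst ln_le_cancel_iff) auto
  also have "\<dots> \<le> (\<Sum>d\<in>{1..2*N}. mangoldt d)" by (rule ln_central_le_psi)
  finally have "ln (4 ^ N / (2 * real N)) \<le> real (card S) * ln (real (2*N))" using ps by linarith
  moreover have "ln (4 ^ N / (2 * real N)) = real N * ln 4 - ln (real (2*N))"
    using Npos by (simp add: ln_div ln_realpow)
  ultimately have "real N * ln 4 \<le> (real (card S) + 1) * ln (real (2*N))"
    by (simp add: algebra_simps)
  also have "\<dots> \<le> (real (card S) + 1) * ln y"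
    using N2 Npos by (intro mult_left_mono) auto
  finally have A: "real N * ln 4 \<le> (real (card S) + 1) * ln y" .
  have "ln (4::real) = 2 * ln 2"
    using ln_realpow[of 2 2] by simp
  moreover have "real N \<ge> y / 4" using N1 assms(2) by linarith
  ultimately have "y / 2 * ln 2 \<le> real N * ln 4"
    by (simp add: mult_right_mono)
  with A assms(3) show False by linarith
qed

lemma two_pow_card_pf:
  assumes "(P::nat) > 0"
  shows "2 ^ card (prime_factors P) \<le> P"
proof -
  have "2 ^ card (prime_factors P) = (\<Prod>p\<in>prime_factors P. (2::nat))" by simp
  also have "\<dots> \<le> (\<Prod>p\<in>prime_factors P. p ^ multiplicity p P)"
  proof (rule prod_mono)
    fix p assume p: "p \<in> prime_factors P"
    then have "prime p" by auto
    then have "2 \<le> p" by (rule prime_ge_2_nat)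
    moreover have "multiplicity p P \<ge> 1" using p assms
      by (simp add: prime_factors_multiplicity Suc_le_eq)
    ultimately have "p \<le> p ^ multiplicity p P" by (simp add: self_le_power)
    with \<open>2 \<le> p\<close> have "2 \<le> p ^ multiplicity p P" by linarith
    then show "0 \<le> (2::nat) \<and> 2 \<le> p ^ multiplicity p P" by simp
  qed
  also have "\<dots> = P" using assms by (simp add: prime_factorization_nat[symmetric])
  finally show ?thesis .
qed

lemma card_pf_le_log:
  assumes "(P::nat) > 0"
  shows "real (card (prime_factors P)) * ln 2 \<le> ln (real P)"
proof -
  have "real (2 ^ card (prime_factors P)) \<le> real P"
    using two_pow_card_pf[OF assms] by linarith
  then have "ln (2 ^ card (prime_factors P)) \<le> ln (real P)"
    using assms by (subst ln_le_cancel_iff) auto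
  then show ?thesis by (simp add: ln_realpow)
qed

lemma ln2_ge_half: "ln (2::real) \<ge> 1/2"
proof -
  have "ln (1/2::real) \<le> 1/2 - 1" by (rule ln_le_minus_one) simp
  then show ?thesis by (simp add: ln_div)
qed

lemma powr_neg_le1: "(x::real) \<ge> 1 \<Longrightarrow> a \<ge> 0 \<Longrightarrow> x powr (-a) \<le> 1"
  by (simp add: powr_minus ge_one_powr_ge_zero inverse_le_1_iff)

lemma one_le_mult_real: "(1::real) \<le> a \<Longrightarrow> 1 \<le> b \<Longrightarrow> 1 \<le> a * b"
  using mult_mono[of 1 a 1 b] by simp

lemma exist_arith:
  fixes Q q0 \<epsilon> A s Sg c2 cS :: real and n :: nat
  assumes q0: "q0 > 1" "Q \<ge> q0" and eps: "0 < \<epsilon>" "\<epsilon> \<le> 1" and A: "A > 0" and s: "s > 0"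
    and Sg: "Sg \<ge> 1" and c2: "c2 \<ge> 1"
    and gr: "real n + 2 \<le> Sg * Q powr s"
    and cS: "cS * ln 2 \<le> real n * (c2/2+1) * ln Q" "cS \<ge> 0"
    and H: "c2/2 - A - 3* s - 2 > 0"
    and K: "16*Sg^3*(c2/2+1)*c2/\<epsilon> < q0 powr (c2/2 - A - 3* s - 2)"
  defines "y \<equiv> \<epsilon> * Q powr (-A) / ((real n+1)*(real n+2)) * Q powr (c2/2) / 2"
  shows "y \<ge> 4 \<and> (cS + 2) * ln y < y / 2 * ln 2"
proof -
  define e where "e = c2/2+1"
  define H' where "H' = c2/2 - A - 3* s - 2"
  have e1: "e \<ge> 1" using c2 by (simp add: e_def)
  have Q1: "Q > 1" using q0 by linarith
  have lnQ0: "ln Q \<ge> 0" using Q1 by simp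
  have lnQ: "ln Q \<le> Q" using ln_le_minus_one[of Q] Q1 by linarith
  have Qs: "Q powr s \<ge> 1" using Q1 s by (simp add: ge_one_powr_ge_zero)
  define B where "B = Sg * e * c2 * Q powr (s+2)"
  have QB: "Q powr (s+2) \<ge> 1" using Q1 s by (simp add: ge_one_powr_ge_zero)
  have B1: "B \<ge> 1"
  proof -
    have "1 \<le> Sg * e" using Sg e1 by (rule one_le_mult_real)
    then have "1 \<le> Sg * e * c2" using c2 by (rule one_le_mult_real)
    then show ?thesis unfolding B_def using QB by (rule one_le_mult_real)
  qed
  have nn: "(real n+1)*(real n+2) \<le> Sg^2 * Q powr (2* s)"
  proof -
    have "(real n+1)*(real n+2) \<le> (real n + 2)^2" by (simp add: power2_eq_square)
    also have "\<dots> \<le> (Sg * Q powr s)^2" using gr by (intro power_mono) auto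
    also have "\<dots> = Sg^2 * Q powr (2* s)"
      by (simp add: power_mult_distrib power2_eq_square powr_add[symmetric])
    finally show ?thesis .
  qed
  have npos: "(real n+1)*(real n+2) > 0" by simp
  have y_eq: "y = \<epsilon> / 2 * Q powr (c2/2 - A) / ((real n+1)*(real n+2))"
    unfolding y_def by (simp add: powr_add[symmetric] field_simps)
  have "\<epsilon> / 2 * Q powr (c2/2 - A) / (Sg^2 * Q powr (2* s)) \<le> y"
    unfolding y_eq using nn npos eps Q1 Sg
    by (intro divide_left_mono) auto
  moreover have "\<epsilon> / 2 * Q powr (c2/2 - A) / (Sg^2 * Q powr (2* s)) = \<epsilon> / (2 * Sg^2) * (Q powr H' * Q powr (s+2))"
  proof -
    have p1: "Q powr H' * Q powr (s+2) = Q powr (c2/2 - A - 2 * s)"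
      unfolding powr_add[symmetric] H'_def by (rule arg_cong[where f="\<lambda>x. Q powr x"]) (simp add: algebra_simps)
    have p2: "Q powr (c2/2 - A - 2 * s) = Q powr (c2/2 - A) / Q powr (2 * s)" by (rule powr_diff)
    show ?thesis unfolding p1 p2 using Sg by (simp add: field_simps)
  qed
  ultimately have y1: "\<epsilon> / (2 * Sg^2) * (Q powr H' * Q powr (s+2)) \<le> y" by simp
  have "q0 powr H' \<le> Q powr H'" using H q0 unfolding H'_def by (intro powr_mono2) auto
  then have "16*Sg^3*e*c2/\<epsilon> < Q powr H'" using K unfolding e_def H'_def by simp
  then have "16*Sg^3*e*c2/\<epsilon> * Q powr (s+2) < Q powr H' * Q powr (s+2)"
    using QB by (intro mult_strict_right_mono) auto
  then have "\<epsilon> / (2 * Sg^2) * (16*Sg^3*e*c2/\<epsilon> * Q powr (s+2)) < \<epsilon> / (2 * Sg^2) * (Q powr H' * Q powr (s+2))"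
    using eps Sg by (intro mult_strict_left_mono) auto
  moreover have "\<epsilon> / (2 * Sg^2) * (16*Sg^3*e*c2/\<epsilon> * Q powr (s+2)) = 8 * B"
    unfolding B_def using eps Sg by (simp add: field_simps power2_eq_square power3_eq_cube)
  ultimately have yB: "8 * B < y" using y1 by linarith
  then have y4: "y \<ge> 4" using B1 by linarith
  have "y \<le> Q powr (c2/2)"
  proof -
    have "Q powr (-A) \<le> 1" using Q1 A by (intro powr_neg_le1) auto
    then have "\<epsilon> * Q powr (-A) \<le> 1" using eps by (intro mult_le_one) auto
    moreover have "(real n+1)*(real n+2) \<ge> 1" by (simp add: algebra_simps)
    ultimately have "\<epsilon> * Q powr (-A) / ((real n+1)*(real n+2)) \<le> 1"
      using eps by (simp add: divide_le_eq_1)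
    then have "\<epsilon> * Q powr (-A) / ((real n+1)*(real n+2)) * Q powr (c2/2) \<le> Q powr (c2/2)"
      using eps by (intro mult_left_le_one_le) auto
    moreover have "0 \<le> \<epsilon> * Q powr (-A) / ((real n+1)*(real n+2)) * Q powr (c2/2)" using eps by simp
    moreover have gen: "\<And>Z W::real. 0 \<le> Z \<Longrightarrow> Z \<le> W \<Longrightarrow> Z/2 \<le> W" by linarith
    ultimately show ?thesis unfolding y_def by blast
  qed
  then have "ln y \<le> ln (Q powr (c2/2))" using y4 Q1 by (subst ln_le_cancel_iff) auto
  then have lny: "ln y \<le> c2/2 * ln Q" by simp
  have lny0: "ln y \<ge> 0" using y4 by simp
  have cS2: "cS \<le> 2 * real n * e * ln Q"
  proof -
    have "cS * (1/2) \<le> cS * ln 2" using cS(2) ln2_ge_half by (intro mult_left_mono) auto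
    then show ?thesis using cS(1) unfolding e_def by linarith
  qed
  have "(cS + 2) * ln y \<le> (2 * real n * e * ln Q + 2) * (c2/2 * ln Q)"
    using cS2 lny lny0 cS(2) by (intro mult_mono) auto
  also have "\<dots> \<le> (4 * (Sg * Q powr s) * e * Q) * (c2/2 * Q)"
  proof -
    have "real n \<le> Sg * Q powr s" using gr by linarith
    then have a1: "2 * real n * e * ln Q \<le> 2 * (Sg * Q powr s) * e * Q"
      using lnQ lnQ0 e1 by (intro mult_mono) auto
    have "1 \<le> Sg * Q powr s" using Sg Qs by (rule one_le_mult_real)
    then have "1 \<le> (Sg * Q powr s) * e" using e1 by (rule one_le_mult_real)
    then have "1 \<le> (Sg * Q powr s) * e * Q" using Q1 one_le_mult_real[of "(Sg * Q powr s) * e" Q] by linarith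
    then have f1: "2 * real n * e * ln Q + 2 \<le> 4 * (Sg * Q powr s) * e * Q" using a1 by linarith
    have f2: "c2 / 2 * ln Q \<le> c2 / 2 * Q" using lnQ c2 by (intro mult_left_mono) auto
    have f3: "0 \<le> c2 / 2 * ln Q" using c2 lnQ0 by simp
    have f4: "0 \<le> 4 * (Sg * Q powr s) * e * Q" using \<open>1 \<le> (Sg * Q powr s) * e * Q\<close> by linarith
    show ?thesis using f1 f2 f4 f3 by (rule mult_mono)
  qed
  also have "\<dots> = 2 * B"
    unfolding B_def using Q1 by (simp add: powr_add field_simps power2_eq_square)
  finally have L: "(cS + 2) * ln y \<le> 2 * B" .
  have "y / 4 \<le> y / 2 * ln 2" using ln2_ge_half y4 by (simp add: field_simps)
  with L yB y4 show ?thesis by linarith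
qed


lemma exist_step:
  fixes Q q0 \<epsilon> A s Sg c2 :: real and n P :: nat
  assumes q0: "q0 > 1" "Q \<ge> q0" and eps: "0 < \<epsilon>" "\<epsilon> \<le> 1" and A: "A > 0" and s: "s > 0"
    and Sg: "Sg \<ge> 1" and c2: "c2 \<ge> 1"
    and gr: "real n + 2 \<le> Sg * Q powr s"
    and P: "P > 0" "real P \<le> Q powr (real n * (c2/2+1))"
    and H: "c2/2 - A - 3 * s - 2 > 0"
    and K: "16*Sg^3*(c2/2+1)*c2/\<epsilon> < q0 powr (c2/2 - A - 3 * s - 2)"
  shows "\<exists>m k. (\<exists>p. prime p \<and> p \<noteq> 2 \<and> p dvd m \<and> \<not> p dvd P) \<and>
           Q - \<epsilon> * Q powr (-A) / (real n + 1) \<le> real m / 2^k \<and>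
           real m / 2^k \<le> Q - \<epsilon> * Q powr (-A) / (real n + 2) \<and>
           2^k \<le> Q powr (c2/2)"
proof -
  have Q1: "Q > 1" using q0 by linarith
  define cS where "cS = real (card (prime_factors P))"
  have "cS * ln 2 \<le> ln (real P)" unfolding cS_def by (rule card_pf_le_log[OF P(1)])
  also have "\<dots> \<le> ln (Q powr (real n * (c2/2+1)))" using P Q1 by (subst ln_le_cancel_iff) auto
  also have "\<dots> = real n * (c2/2+1) * ln Q" by simp
  finally have cS1: "cS * ln 2 \<le> real n * (c2/2+1) * ln Q" .
  have cS0: "cS \<ge> 0" by (simp add: cS_def)
  define ell where "ell = \<epsilon> * Q powr (-A) / ((real n+1)*(real n+2))"
  define y where "y = ell * Q powr (c2/2) / 2"
  have yy: "y \<ge> 4 \<and> (cS + 2) * ln y < y / 2 * ln 2"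
    unfolding y_def ell_def
    by (rule exist_arith[OF q0 eps A s Sg c2 gr cS1 cS0 H K])
  define S where "S = insert 2 (prime_factors P)"
  have finS: "finite S" by (simp add: S_def)
  have "card S \<le> Suc (card (prime_factors P))" unfolding S_def by (rule card_insert_le_m1) auto
  then have "real (card S) + 1 \<le> cS + 2" unfolding cS_def by simp
  moreover have "ln y \<ge> 0" using yy by simp
  ultimately have "(real (card S) + 1) * ln y \<le> (cS + 2) * ln y" by (intro mult_right_mono) auto
  with yy have "(real (card S) + 1) * ln y < y / 2 * ln 2" by linarith
  then obtain p where p: "prime p" "real p \<le> y" "p \<notin> S"
    using exists_prime_avoiding[OF finS] yy by blast
  have p2: "p \<noteq> 2" and pP: "\<not> p dvd P" using p P(1) by (auto simp: S_def in_prime_factors_iff)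
  have lpos: "ell > 0" unfolding ell_def using eps Q1 by simp
  have lle: "ell \<le> 1"
  proof -
    have "Q powr (-A) \<le> 1" using Q1 A by (intro powr_neg_le1) auto
    then have "\<epsilon> * Q powr (-A) \<le> 1" using eps by (intro mult_le_one) auto
    moreover have "(real n+1)*(real n+2) \<ge> 1" by (simp add: algebra_simps)
    ultimately show ?thesis unfolding ell_def using eps by (simp add: divide_le_eq_1)
  qed
  obtain k0 where "y / ell < 2 ^ k0" using real_arch_pow[of 2 "y / ell"] by auto
  then have ex: "y \<le> ell * 2 ^ k0" using lpos by (simp add: field_simps)
  define k where "k = (LEAST k. y \<le> ell * 2 ^ k)"
  have k1: "y \<le> ell * 2 ^ k" unfolding k_def by (rule LeastI[of _ k0]) (rule ex)
  have "k \<noteq> 0"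
  proof
    assume "k = 0"
    with k1 have "y \<le> ell" by simp
    with lle yy show False by linarith
  qed
  then obtain k' where kk: "k = Suc k'" by (cases k) auto
  have "\<not> y \<le> ell * 2 ^ k'" unfolding k_def
    by (rule not_less_Least) (simp add: kk k_def[symmetric])
  then have "ell * 2 ^ k' < y" by simp
  then have "ell * 2 ^ k < 2 * y" by (simp add: kk)
  then have "2 ^ k < 2 * y / ell" using lpos by (simp add: field_simps)
  also have "2 * y / ell = Q powr (c2/2)" unfolding y_def using lpos by simp
  finally have kQ: "2 ^ k \<le> Q powr (c2/2)" by simp
  define lo where "lo = Q - \<epsilon> * Q powr (-A) / (real n + 1)"
  define hi where "hi = Q - \<epsilon> * Q powr (-A) / (real n + 2)"
  have d1: "real n + 1 \<noteq> 0" "real n + 2 \<noteq> 0" by linarith+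
  have fd: "\<And>Z::real. Z / (real n + 1) - Z / (real n + 2) = Z / ((real n + 1) * (real n + 2))"
  proof -
    fix Z :: real
    have "(real n + 1) * (real n + 2) \<noteq> 0" using d1 by simp
    then show "Z / (real n + 1) - Z / (real n + 2) = Z / ((real n + 1) * (real n + 2))"
      using d1 by (simp add: divide_simps) (simp add: algebra_simps)
  qed
  have hilo: "hi = lo + ell" unfolding hi_def lo_def ell_def using fd[of "\<epsilon> * Q powr (-A)"] by simp
  have lo0: "lo > 0"
  proof -
    have "Q powr (-A) \<le> 1" using Q1 A by (intro powr_neg_le1) auto
    then have "\<epsilon> * Q powr (-A) \<le> 1" using eps by (intro mult_le_one) auto
    moreover have "\<epsilon> * Q powr (-A) / (real n + 1) \<le> \<epsilon> * Q powr (-A)"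
      using divide_left_mono[of 1 "real n + 1" "\<epsilon> * Q powr (-A)"] eps by simp
    ultimately show ?thesis unfolding lo_def using Q1 by linarith
  qed
  have ppos: "real p > 0" using p(1) prime_gt_0_nat by simp
  define t where "t = \<lceil>2 ^ k * lo / real p\<rceil>"
  have t1: "real_of_int t \<ge> 2 ^ k * lo / real p" unfolding t_def by (rule le_of_int_ceiling)
  have t2: "real_of_int t \<le> 2 ^ k * lo / real p + 1" unfolding t_def by (rule of_int_ceiling_le_add_one)
  have "0 \<le> 2 ^ k * lo / real p" using lo0 ppos by simp
  then have "real_of_int t \<ge> 0" using t1 by linarith
  then have t0: "t \<ge> 0" by simp
  define m where "m = nat t * p"
  have mreal: "real m = real_of_int t * real p" unfolding m_def using t0 by simp
  have m1: "2 ^ k * lo \<le> real m" unfolding mreal using t1 ppos by (simp add: field_simps)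
  have "real m \<le> (2 ^ k * lo / real p + 1) * real p" unfolding mreal using t2 ppos
    by (intro mult_right_mono) auto
  also have "\<dots> = 2 ^ k * lo + real p" using ppos by (simp add: field_simps)
  also have "\<dots> \<le> 2 ^ k * lo + 2 ^ k * ell" using p(2) k1 by (simp add: mult.commute)
  also have "\<dots> = 2 ^ k * hi" unfolding hilo by (simp add: algebra_simps)
  finally have m2: "real m \<le> 2 ^ k * hi" by simp
  have "lo \<le> real m / 2 ^ k" using m1 by (simp add: field_simps)
  moreover have "real m / 2 ^ k \<le> hi" using m2 by (simp add: field_simps)
  moreover have "p dvd m" unfolding m_def by simp
  ultimately show ?thesis using p(1) p2 pP kQ unfolding lo_def hi_def by blast
qed

lemma enum_exists:
  fixes T :: "real set"
  assumes inf: "infinite T" and fin: "\<And>b. finite {t\<in>T. t \<le> b}"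
  shows "\<exists>f::nat \<Rightarrow> real. strict_mono f \<and> range f = T"
proof -
  define g where "g = (\<lambda>t. card {u\<in>T. u < t})"
  have finlt: "finite {u\<in>T. u < t}" for t
    by (rule finite_subset[OF _ fin[of t]]) auto
  have gmono: "g t < g t'" if "t \<in> T" "t' \<in> T" "t < t'" for t t'
  proof -
    have "{u\<in>T. u < t} \<subset> {u\<in>T. u < t'}" using that by auto
    then show ?thesis unfolding g_def by (rule psubset_card_mono[OF finlt])
  qed
  have ginj: "inj_on g T"
  proof (rule inj_onI)
    fix x y assume "x \<in> T" "y \<in> T" "g x = g y"
    then show "x = y" using gmono[of x y] gmono[of y x] by (cases x y rule: linorder_cases) auto
  qed
  have gsurj: "\<exists>t\<in>T. g t = N" for N
  proof -
    have "infinite (g ` T)" using inf ginj finite_imageD by blast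
    then obtain t where t: "t \<in> T" "g t \<ge> N"
      unfolding infinite_nat_iff_unbounded_le by auto
    define B where "B = {u\<in>T. u < t}"
    have finB: "finite B" unfolding B_def by (rule finlt)
    have "g ` B \<subseteq> {..<g t}" using gmono t unfolding B_def by auto
    moreover have "card (g ` B) = g t"
      unfolding B_def g_def
      by (subst card_image) (use ginj in \<open>auto intro: inj_on_subset simp: g_def\<close>)
    ultimately have "g ` B = {..<g t}"
      by (intro card_subset_eq) auto
    show ?thesis
    proof (cases "g t = N")
      case True then show ?thesis using t by blast
    next
      case False
      then have "N \<in> g ` B" using t \<open>g ` B = {..<g t}\<close> by auto
      then show ?thesis unfolding B_def by auto
    qed
  qed
  define f where "f = (\<lambda>N. SOME t. t \<in> T \<and> g t = N)"
  have f: "f N \<in> T \<and> g (f N) = N" for N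
    unfolding f_def using someI_ex[OF gsurj[of N, unfolded Bex_def]] .
  have "strict_mono f"
  proof (rule strict_monoI)
    fix M N :: nat assume MN: "M < N"
    show "f M < f N"
    proof (rule ccontr)
      assume "\<not> f M < f N"
      then have "f N \<le> f M" by simp
      then have "g (f N) \<le> g (f M)"
        using gmono[of "f N" "f M"] f[of M] f[of N] by (cases "f N = f M") auto
      then show False using f[of M] f[of N] MN by simp
    qed
  qed
  moreover have "range f = T"
  proof
    show "range f \<subseteq> T" using f by auto
    show "T \<subseteq> range f"
    proof
      fix t assume t: "t \<in> T"
      have "f (g t) = t" using f[of "g t"] t ginj by (auto dest: inj_onD)
      then show "t \<in> range f" by (metis rangeI)
    qed
  qed
  ultimately show ?thesis by blast
qed


lemma factor_le_prod:
  fixes f :: "nat \<Rightarrow> real"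
  assumes "finite F" "i \<in> F" "\<And>j. j \<in> F \<Longrightarrow> f j \<ge> 1"
  shows "f i \<le> prod f F"
proof -
  have "prod f F = f i * prod f (F - {i})" using assms by (simp add: prod.remove)
  moreover have "prod f (F - {i}) \<ge> 1" using assms by (intro prod_ge_1) auto
  moreover have "f i \<ge> 0" using assms(3)[OF assms(2)] by simp
  ultimately have "f i * 1 \<le> f i * prod f (F - {i})" by (intro mult_left_mono) auto
  then show ?thesis using \<open>prod f F = f i * prod f (F - {i})\<close> by simp
qed

lemma bint_ge1:
  assumes "\<And>i. q i \<ge> 1" "x \<in> beurling_integers q"
  shows "x \<ge> 1"
  using assms(2) unfolding beurling_integers_def
  by (auto intro!: prod_ge_1 one_le_power assms(1))

lemma bint_mem: "q i \<in> beurling_integers q" and bint_one: "1 \<in> beurling_integers q"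
proof -
  let ?e = "\<lambda>j::nat. if j = i then 1 else (0::nat)"
  have "{j. ?e j \<noteq> 0} = {i}" by auto
  then show "q i \<in> beurling_integers q" unfolding beurling_integers_def
    by (intro CollectI exI[of _ ?e]) simp
  show "1 \<in> beurling_integers q" unfolding beurling_integers_def
    by (intro CollectI exI[of _ "\<lambda>_. 0"]) simp
qed

lemma bint_inf:
  assumes "inj q"
  shows "infinite (beurling_integers q)"
proof
  assume "finite (beurling_integers q)"
  moreover have "range q \<subseteq> beurling_integers q" using bint_mem by auto
  ultimately have "finite (range q)" by (rule finite_subset[rotated])
  then show False using assms finite_imageD by (metis infinite_UNIV_nat)
qed

lemma bint_fin:
  fixes q :: "nat \<Rightarrow> real"
  assumes r: "r > 1" "\<And>i. q i \<ge> r" and lim: "filterlim q at_top sequentially"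
  shows "finite {x \<in> beurling_integers q. x \<le> b}"
proof -
  from lim have "eventually (\<lambda>i. q i > b) sequentially"
    by (simp add: filterlim_at_top_dense)
  then obtain I where I: "\<And>i. i \<ge> I \<Longrightarrow> q i > b" by (auto simp: eventually_sequentially)
  define E where "E = nat \<lceil>(b - 1) / (r - 1)\<rceil>"
  define FS where "FS = {f::nat \<Rightarrow> nat. \<forall>x. (x \<in> {..<I} \<longrightarrow> f x \<in> {..E}) \<and> (x \<notin> {..<I} \<longrightarrow> f x = 0)}"
  have finFS: "finite FS" unfolding FS_def by (rule finite_set_of_finite_funs) auto
  define g where "g = (\<lambda>e::nat \<Rightarrow> nat. \<Prod>i\<in>{i. e i \<noteq> 0}. q i ^ e i)"
  have "{x \<in> beurling_integers q. x \<le> b} \<subseteq> g ` FS"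
  proof
    fix x assume x: "x \<in> {x \<in> beurling_integers q. x \<le> b}"
    then obtain e where e: "finite {i. e i \<noteq> 0}" "x = g e"
      unfolding beurling_integers_def g_def by auto
    have ge1: "\<And>j. 1 \<le> q j ^ e j" using r by (intro one_le_power) (auto intro: order_trans[of 1 r])
    have "e \<in> FS" unfolding FS_def
    proof (intro CollectI allI conjI impI)
      fix i
      have bnd: "q i ^ e i \<le> b" if "e i \<noteq> 0"
      proof -
        have "q i ^ e i \<le> g e" unfolding g_def
          by (rule factor_le_prod[where f="\<lambda>i. q i ^ e i"]) (use e that ge1 in auto)
        then show ?thesis using x e by simp
      qed
      show "e i = 0" if "i \<notin> {..<I}"
      proof (rule ccontr)
        assume ne: "e i \<noteq> 0"
        have "1 \<le> q i" using r(1) assms(2)[of i] by linarith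
        then have "q i \<le> q i ^ e i" using ne by (intro self_le_power) auto
        with bnd[OF ne] I[of i] that show False by auto
      qed
      show "e i \<in> {..E}"
      proof (cases "e i = 0")
        case False
        have "1 + real (e i) * (r - 1) \<le> (1 + (r - 1)) ^ e i"
          using r by (intro Bernoulli_inequality) auto
        also have "\<dots> = r ^ e i" by simp
        also have "\<dots> \<le> q i ^ e i" using r assms(2)[of i] by (intro power_mono) auto
        also have "\<dots> \<le> b" by (rule bnd[OF False])
        finally have "real (e i) \<le> (b - 1) / (r - 1)" using r by (simp add: field_simps)
        then have "real (e i) \<le> real E" unfolding E_def by linarith
        then show ?thesis by simp
      qed simp
    qed
    then show "x \<in> g ` FS" using e by auto
  qed
  then show ?thesis by (rule finite_subset) (use finFS in simp)
qed

lemma nu_props: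
  fixes q :: "nat \<Rightarrow> real"
  assumes r: "r > 1" "\<And>i. q i \<ge> r" and lim: "filterlim q at_top sequentially" and inj: "inj q"
  shows "strict_mono (beurling_nu q) \<and> range (beurling_nu q) = beurling_integers q"
proof -
  have "\<exists>f::nat \<Rightarrow> real. strict_mono f \<and> range f = beurling_integers q"
    by (rule enum_exists[OF bint_inf[OF inj] bint_fin[OF r lim]])
  then show ?thesis unfolding beurling_nu_def by (rule someI_ex)
qed


lemma growth:
  fixes q :: "nat \<Rightarrow> real"
  assumes sm: "strict_mono q" and r: "r > 1" "\<And>i. q i \<ge> r" and lim: "filterlim q at_top sequentially"
    and ab: "abscissa_finite q"
  shows "\<exists>s Sg. s > 0 \<and> Sg \<ge> 1 \<and> (\<forall>n. real n + 2 \<le> Sg * q n powr s)"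
proof -
  define nu where "nu = beurling_nu q"
  have inj: "inj q" using sm by (rule strict_mono_imp_inj_on)
  have nup: "strict_mono nu \<and> range nu = beurling_integers q"
    unfolding nu_def by (rule nu_props[OF r lim inj])
  have q1: "\<And>i. q i \<ge> 1" using r by (meson less_imp_le order_trans)
  have nu1: "nu j \<ge> 1" for j
  proof -
    have "nu j \<in> beurling_integers q" using nup by auto
    then show ?thesis by (rule bint_ge1[OF q1])
  qed
  obtain s where s: "summable (\<lambda>n. nu n powr (- s))" using ab unfolding abscissa_finite_def nu_def by blast
  have spos: "s > 0"
  proof (rule ccontr)
    assume "\<not> s > 0"
    then have "\<And>n. 1 \<le> nu n powr (- s)" using nu1 by (intro ge_one_powr_ge_zero) auto
    moreover have "(\<lambda>n. nu n powr (- s)) \<longlonglongrightarrow> 0" by (rule summable_LIMSEQ_zero[OF s])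
    ultimately have "(1::real) \<le> 0" by (intro LIMSEQ_le_const) auto
    then show False by simp
  qed
  define Sm where "Sm = suminf (\<lambda>n. nu n powr (- s))"
  have nule: "nu (Suc n) \<le> q n" for n
  proof (rule ccontr)
    assume "\<not> nu (Suc n) \<le> q n"
    then have lt: "q n < nu (Suc n)" by simp
    define B where "B = insert 1 (q ` {..n})"
    have "1 \<notin> q ` {..n}"
    proof
      assume "1 \<in> q ` {..n}"
      then obtain x where "q x = 1" by auto
      then show False using r(1) r(2)[of x] by simp
    qed
    then have cB: "card B = Suc (Suc n)" unfolding B_def
      using inj by (simp add: card_image inj_on_subset)
    have "B \<subseteq> nu ` {..n}"
    proof
      fix t assume t: "t \<in> B"
      then have tT: "t \<in> beurling_integers q" unfolding B_def using bint_mem bint_one by auto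
      have tq: "t \<le> q n" using t unfolding B_def
        by (auto intro: strict_mono_less_eq[OF sm, THEN iffD2] simp: q1[of n])
      from tT nup obtain j where j: "t = nu j" by auto
      have "j \<le> n"
      proof (rule ccontr)
        assume "\<not> j \<le> n"
        then have "Suc n \<le> j" by simp
        then have "nu (Suc n) \<le> nu j" using nup by (simp add: strict_mono_less_eq)
        then show False using lt tq j by simp
      qed
      then show "t \<in> nu ` {..n}" using j by auto
    qed
    then have "card B \<le> card (nu ` {..n})" by (intro card_mono) auto
    also have "\<dots> \<le> Suc n" using card_image_le[of "{..n}" nu] by simp
    finally show False using cB by simp
  qed
  have key: "real n + 2 \<le> Sm * q n powr s" for n
  proof -
    have qpos: "q n > 0" using q1[of n] by simp
    have "(\<Sum>j<Suc (Suc n). q n powr (- s)) \<le> (\<Sum>j<Suc (Suc n). nu j powr (- s))"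
    proof (rule sum_mono)
      fix j assume "j \<in> {..<Suc (Suc n)}"
      then have "j \<le> Suc n" by simp
      then have "nu j \<le> nu (Suc n)" using nup by (simp add: strict_mono_less_eq)
      then have "nu j \<le> q n" using nule[of n] by simp
      then show "q n powr (- s) \<le> nu j powr (- s)"
        using spos nu1[of j] by (intro powr_mono2') auto
    qed
    also have "\<dots> \<le> Sm" unfolding Sm_def by (rule sum_le_suminf[OF s]) auto
    finally have "(real n + 2) * q n powr (- s) \<le> Sm" by (simp add: add.commute)
    then have "(real n + 2) * q n powr (- s) * q n powr s \<le> Sm * q n powr s"
      by (intro mult_right_mono) auto
    moreover have "q n powr (- s) * q n powr s = 1" using qpos by (simp add: powr_minus)
    ultimately show ?thesis by (simp add: mult.assoc)
  qed
  show ?thesis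
  proof (intro exI conjI allI)
    show "s > 0" by (rule spos)
    show "max 1 Sm \<ge> 1" by simp
    fix n
    have "Sm * q n powr s \<le> max 1 Sm * q n powr s" by (intro mult_right_mono) auto
    then show "real n + 2 \<le> max 1 Sm * q n powr s" using key[of n] by linarith
  qed
qed

lemma exp_cube_bound:
  assumes "x \<ge> (0::real)"
  shows "(x/3)^3 \<le> exp x"
proof -
  have "x/3 \<le> 1 + x/3" by simp
  also have "\<dots> \<le> exp (x/3)" by (rule exp_ge_add_one_self)
  finally have "(x/3)^3 \<le> exp (x/3) ^ 3" using assms by (intro power_mono) auto
  also have "exp (x/3) ^ 3 = exp (real 3 * (x/3))" by (rule exp_of_nat_mult[symmetric])
  finally show ?thesis by simp
qed

lemma choose_c2:
  fixes q0 \<epsilon> Sg A s :: real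
  assumes q0: "q0 > 1" and eps: "\<epsilon> > 0" and Sg: "Sg \<ge> 1" and A: "A > 0" and s: "s > 0"
  shows "\<exists>c2\<ge>1. c2/2 - A - 3 * s - 2 > 0 \<and> 16*Sg^3*(c2/2+1)*c2/\<epsilon> < q0 powr (c2/2 - A - 3 * s - 2)"
proof -
  define l where "l = ln q0"
  have l: "l > 0" using q0 unfolding l_def by simp
  define B where "B = A + 3 * s + 2"
  have B: "B > 0" using A s unfolding B_def by simp
  define D where "D = 16*Sg^3/\<epsilon>"
  have D: "D > 0" using Sg eps unfolding D_def by simp
  define u where "u = B + 2 + 216 * D / l^3"
  have u1: "u \<ge> B + 1" unfolding u_def using D l by simp
  have u2: "u > 216 * D / l^3" unfolding u_def using B by simp
  have upos: "u > 0" using u1 B by simp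
  define c2 where "c2 = 2 * (B + u)"
  have ce: "c2/2 - A - 3 * s - 2 = u" unfolding c2_def B_def by (simp add: field_simps)
  have "16*Sg^3*(c2/2+1)*c2/\<epsilon> = 2 * D * (B + u + 1) * (B + u)"
    unfolding c2_def D_def using eps by (simp add: field_simps)
  also have "\<dots> \<le> 2 * D * (2*u) * (2*u)"
    using u1 B D by (intro mult_mono) auto
  also have "\<dots> = 8 * D * u^2" by (simp add: power2_eq_square)
  also have "\<dots> < (l*u/3)^3"
  proof -
    have "216 * D < u * l^3" using u2 l by (simp add: field_simps)
    then have "216 * D * u^2 < u * l^3 * u^2" using upos by (intro mult_strict_right_mono) auto
    then show ?thesis by (simp add: power3_eq_cube power2_eq_square field_simps)
  qed
  also have "\<dots> \<le> exp (l * u)" using l upos by (intro exp_cube_bound) simp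
  also have "exp (l * u) = q0 powr u" using q0 unfolding l_def by (simp add: powr_def mult.commute)
  finally have "16*Sg^3*(c2/2+1)*c2/\<epsilon> < q0 powr (c2/2 - A - 3 * s - 2)" unfolding ce .
  moreover have "c2 \<ge> 1" unfolding c2_def using B u1 by simp
  ultimately show ?thesis using ce upos by blast
qed

lemma clear_denoms:
  fixes c :: "nat \<Rightarrow> rat"
  assumes "finite F"
  shows "\<exists>d::int. d > 0 \<and> (\<forall>i\<in>F. \<exists>w::int. of_int d * c i = of_int w)"
  using assms
proof (induction F rule: finite_induct)
  case empty
  show ?case by (intro exI[of _ 1]) simp
next
  case (insert x F)
  then obtain d where d: "d > 0" "\<forall>i\<in>F. \<exists>w::int. of_int d * c i = of_int w" by blast
  obtain a b where ab: "quotient_of (c x) = (a, b)" by (cases "quotient_of (c x)") auto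
  have b: "b > 0" using quotient_of_denom_pos[OF ab] .
  have cx: "c x = of_int a / of_int b" using quotient_of_div[OF ab] .
  show ?case
  proof (rule exI[of _ "d * b"], intro conjI ballI)
    show "d * b > 0" using d b by simp
  next
    fix i assume "i \<in> insert x F"
    then show "\<exists>w::int. of_int (d * b) * c i = of_int w"
    proof
      assume "i = x"
      then show ?thesis using b cx by (intro exI[of _ "d * a"]) (simp add: field_simps)
    next
      assume "i \<in> F"
      then obtain w where "of_int d * c i = of_int w" using d by blast
      then show ?thesis by (intro exI[of _ "w * b"]) (simp add: field_simps)
    qed
  qed
qed

lemma mult_prod_pow:
  fixes m a :: "nat \<Rightarrow> nat"
  assumes "prime p" "finite F" "\<And>i. m i > 0"
  shows "multiplicity p (\<Prod>i\<in>F. m i ^ a i) = (\<Sum>i\<in>F. a i * multiplicity p (m i))"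
proof -
  have pe: "prime_elem p" using assms(1) by simp
  have m0: "\<forall>i. m i \<noteq> 0" using assms(3) by (metis not_gr0)
  have "multiplicity p (\<Prod>i\<in>F. m i ^ a i) = (\<Sum>i\<in>F. multiplicity p (m i ^ a i))"
  proof (rule prime_elem_multiplicity_prod_distrib[OF pe])
    have nz: "\<forall>i. m i ^ a i \<noteq> 0" using m0 by simp
    then show "0 \<notin> (\<lambda>i. m i ^ a i) ` F" by (auto simp: image_iff)
  qed (rule assms(2))
  also have "\<dots> = (\<Sum>i\<in>F. a i * multiplicity p (m i))"
    by (rule sum.cong[OF refl], rule prime_elem_multiplicity_power_distrib[OF pe]) (use assms(3) in \<open>simp add: gr0_conv_Suc\<close>)
  finally show ?thesis .
qed

lemma indep:
  fixes m k :: "nat \<Rightarrow> nat" and q' :: "nat \<Rightarrow> real"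
  assumes qd: "\<And>i. q' i = real (m i) / 2 ^ k i" and mpos: "\<And>i. m i > 0"
    and priv: "\<And>n. \<exists>p. prime p \<and> p \<noteq> 2 \<and> p dvd m n \<and> (\<forall>i<n. \<not> p dvd m i)"
    and fin: "finite F" and sum0: "(\<Sum>i\<in>F. of_rat (c i) * ln (q' i)) = 0"
  shows "\<forall>i\<in>F. c i = 0"
proof (rule ccontr)
  assume "\<not> (\<forall>i\<in>F. c i = 0)"
  define G where "G = {i\<in>F. c i \<noteq> 0}"
  have GF: "G \<subseteq> F" and Gne: "G \<noteq> {}" using \<open>\<not> (\<forall>i\<in>F. c i = 0)\<close> by (auto simp: G_def)
  have finG: "finite G" using fin GF finite_subset by blast
  define n where "n = Max G"
  have nG: "n \<in> G" unfolding n_def using finG Gne by (rule Max_in)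
  have nmax: "\<And>i. i \<in> G \<Longrightarrow> i \<le> n" unfolding n_def using finG by simp
  obtain d :: int where d: "d > 0" "\<forall>i\<in>F. \<exists>w::int. of_int d * c i = of_int w"
    using clear_denoms[OF fin] by blast
  define w where "w = (\<lambda>i. SOME w::int. of_int d * c i = of_int w)"
  have w: "of_int d * c i = of_int (w i)" if "i \<in> F" for i
    unfolding w_def using d(2) that by (metis (mono_tags, lifting) someI_ex)
  have wr: "real_of_int (w i) = real_of_int d * of_rat (c i)" if "i \<in> F" for i
  proof -
    have "real_of_rat (of_int (w i)) = real_of_rat (of_int d * c i)" using w[OF that] by simp
    then show ?thesis by (simp add: of_rat_mult)
  qed
  have lnq: "ln (q' i) = ln (real (m i)) - real (k i) * ln 2" for i
    using mpos[of i] unfolding qd by (simp add: ln_div ln_realpow)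
  define a where "a = (\<lambda>i. nat (w i))"
  define b where "b = (\<lambda>i. nat (- w i))"
  have wab: "real_of_int (w i) = real (a i) - real (b i)" for i unfolding a_def b_def by simp
  have "(\<Sum>i\<in>F. real_of_int (w i) * ln (q' i)) = real_of_int d * (\<Sum>i\<in>F. of_rat (c i) * ln (q' i))"
    by (simp add: sum_distrib_left wr mult.assoc)
  also have "\<dots> = 0" using sum0 by simp
  finally have s0: "(\<Sum>i\<in>F. (real (a i) - real (b i)) * (ln (real (m i)) - real (k i) * ln 2)) = 0"
    by (simp add: wab lnq)
  define X where "X = (\<Prod>i\<in>F. m i ^ a i) * 2 ^ (\<Sum>i\<in>F. b i * k i)"
  define Y where "Y = (\<Prod>i\<in>F. m i ^ b i) * 2 ^ (\<Sum>i\<in>F. a i * k i)"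
  have Xpos: "X > 0" and Ypos: "Y > 0" unfolding X_def Y_def using mpos fin by auto
  have lnX: "ln (real X) = (\<Sum>i\<in>F. real (a i) * ln (real (m i))) + real (\<Sum>i\<in>F. b i * k i) * ln 2"
    unfolding X_def using mpos fin
    by (simp add: ln_mult ln_prod ln_realpow prod_pos)
  have lnY: "ln (real Y) = (\<Sum>i\<in>F. real (b i) * ln (real (m i))) + real (\<Sum>i\<in>F. a i * k i) * ln 2"
    unfolding Y_def using mpos fin
    by (simp add: ln_mult ln_prod ln_realpow prod_pos)
  have hA: "(\<Sum>i\<in>F. real (a i) * (real (k i) * ln 2)) = ln 2 * (\<Sum>i\<in>F. real (a i) * real (k i))"
    unfolding sum_distrib_left by (rule sum.cong) (simp_all add: mult_ac)
  have hB: "(\<Sum>i\<in>F. real (b i) * (real (k i) * ln 2)) = ln 2 * (\<Sum>i\<in>F. real (b i) * real (k i))"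
    unfolding sum_distrib_left by (rule sum.cong) (simp_all add: mult_ac)
  have "(\<Sum>i\<in>F. (real (a i) - real (b i)) * (ln (real (m i)) - real (k i) * ln 2))
     = (\<Sum>i\<in>F. real (a i) * ln (real (m i))) - (\<Sum>i\<in>F. real (b i) * ln (real (m i)))
       - ((\<Sum>i\<in>F. real (a i) * real (k i)) - (\<Sum>i\<in>F. real (b i) * real (k i))) * ln 2"
    by (simp add: algebra_simps sum_subtractf sum.distrib sum_distrib_right hA hB)
  then have "ln (real X) - ln (real Y) = (\<Sum>i\<in>F. (real (a i) - real (b i)) * (ln (real (m i)) - real (k i) * ln 2))"
    unfolding lnX lnY by (simp add: algebra_simps)
  then have "ln (real X) = ln (real Y)" using s0 by simp
  then have XY: "X = Y" using Xpos Ypos by simp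
  obtain p where p: "prime p" "p \<noteq> 2" "p dvd m n" "\<forall>i<n. \<not> p dvd m i" using priv by blast
  have m2: "multiplicity p (2 ^ j) = 0" for j
    using p by (intro multiplicity_distinct_prime_power) auto
  have mi0: "multiplicity p (m i) = 0" if "i \<in> F" "i \<noteq> n" "c i \<noteq> 0" for i
  proof -
    have "i \<in> G" using that by (simp add: G_def)
    then have "i < n" using nmax[of i] that by simp
    then show ?thesis using p(4) by (simp add: not_dvd_imp_multiplicity_0)
  qed
  have ab0: "a i = 0 \<and> b i = 0" if "i \<in> F" "c i = 0" for i
  proof -
    have "w i = 0" using wr[OF that(1)] that(2) by simp
    then show ?thesis unfolding a_def b_def by simp
  qed
  have multX: "multiplicity p X = a n * multiplicity p (m n)"
  proof -
    have "multiplicity p X = (\<Sum>i\<in>F. a i * multiplicity p (m i))"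
      unfolding X_def using p(1) mpos fin
      by (simp add: prime_elem_multiplicity_mult_distrib mult_prod_pow m2 prod_pos)
    also have "\<dots> = a n * multiplicity p (m n) + (\<Sum>i\<in>F - {n}. a i * multiplicity p (m i))"
      by (rule sum.remove) (use nG GF fin in auto)
    also have "(\<Sum>i\<in>F - {n}. a i * multiplicity p (m i)) = 0"
    proof (intro sum.neutral ballI)
      fix i assume "i \<in> F - {n}"
      then show "a i * multiplicity p (m i) = 0" using mi0[of i] ab0[of i] by (cases "c i = 0") auto
    qed
    finally show ?thesis by simp
  qed
  have multY: "multiplicity p Y = b n * multiplicity p (m n)"
  proof -
    have "multiplicity p Y = (\<Sum>i\<in>F. b i * multiplicity p (m i))"
      unfolding Y_def using p(1) mpos fin
      by (simp add: prime_elem_multiplicity_mult_distrib mult_prod_pow m2 prod_pos)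
    also have "\<dots> = b n * multiplicity p (m n) + (\<Sum>i\<in>F - {n}. b i * multiplicity p (m i))"
      by (rule sum.remove) (use nG GF fin in auto)
    also have "(\<Sum>i\<in>F - {n}. b i * multiplicity p (m i)) = 0"
    proof (intro sum.neutral ballI)
      fix i assume "i \<in> F - {n}"
      then show "b i * multiplicity p (m i) = 0" using mi0[of i] ab0[of i] by (cases "c i = 0") auto
    qed
    finally show ?thesis by simp
  qed
  have "multiplicity p (m n) > 0" using p mpos[of n] by (simp add: prime_multiplicity_gt_zero_iff)
  then have "a n = b n" using multX multY XY by simp
  then have "w n = 0" unfolding a_def b_def by simp
  then have "c n = 0" using wr[of n] nG GF d(1) by auto
  then show False using nG by (simp add: G_def)
qed

lemma powr_pow_comm:
  fixes x c :: real
  assumes "x > 0"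
  shows "(x powr c) ^ n = (x ^ n) powr c"
proof (induction n)
  case 0 then show ?case by simp
next
  case (Suc n)
  have "(x powr c) ^ Suc n = x powr c * (x ^ n) powr c" using Suc by simp
  also have "\<dots> = (x * x ^ n) powr c" using assms by (simp add: powr_mult)
  finally show ?case by simp
qed

lemma nat_real_gap: "real u < real v \<Longrightarrow> real v - real u \<ge> (1::real)"
proof -
  assume "real u < real v"
  then have "u + 1 \<le> v" by simp
  then have "real u + 1 \<le> real v" by (metis of_nat_1 of_nat_add of_nat_le_iff)
  then show ?thesis by simp
qed

lemma bohr_rep:
  fixes m k :: "nat \<Rightarrow> nat" and q' :: "nat \<Rightarrow> real" and c2 :: real
  assumes qd: "\<And>i. q' i = real (m i) / 2 ^ k i" and mpos: "\<And>i. m i > 0"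
    and kb: "\<And>i. 2 ^ k i \<le> q' i powr c2"
    and x: "x \<in> beurling_integers q'"
  shows "\<exists>a K::nat. x = real a / 2 ^ K \<and> 2 ^ K \<le> x powr c2"
proof -
  from x obtain e where e: "finite {i. e i \<noteq> 0}" "x = (\<Prod>i\<in>{i. e i \<noteq> 0}. q' i ^ e i)"
    unfolding beurling_integers_def by auto
  define F where "F = {i. e i \<noteq> 0}"
  have qpos: "q' i > 0" for i using mpos[of i] unfolding qd by simp
  define a where "a = (\<Prod>i\<in>F. m i ^ e i)"
  define K where "K = (\<Sum>i\<in>F. k i * e i)"
  have "x = (\<Prod>i\<in>F. real (m i) ^ e i / (2 ^ k i) ^ e i)"
    unfolding e(2) F_def[symmetric] qd by (simp add: power_divide)
  also have "\<dots> = real a / (\<Prod>i\<in>F. (2 ^ k i) ^ e i)"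
    unfolding prod_dividef a_def by simp
  also have "(\<Prod>i\<in>F. ((2::real) ^ k i) ^ e i) = 2 ^ K"
    unfolding K_def power_sum by (simp add: power_mult)
  finally have xa: "x = real a / 2 ^ K" .
  have "(2::real) ^ K = (\<Prod>i\<in>F. (2 ^ k i) ^ e i)"
    unfolding K_def power_sum by (simp add: power_mult)
  also have "\<dots> \<le> (\<Prod>i\<in>F. (q' i powr c2) ^ e i)"
    by (intro prod_mono conjI power_mono kb) auto
  also have "\<dots> = (\<Prod>i\<in>F. (q' i ^ e i) powr c2)"
    using qpos by (simp add: powr_pow_comm)
  also have "\<dots> = x powr c2"
    unfolding e(2) F_def[symmetric] by (simp add: prod_powr_distrib)
  finally show ?thesis using xa by blast
qed

lemma bohr_gap:
  fixes m k :: "nat \<Rightarrow> nat" and q' :: "nat \<Rightarrow> real" and c2 :: real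
  assumes qd: "\<And>i. q' i = real (m i) / 2 ^ k i" and mpos: "\<And>i. m i > 0"
    and kb: "\<And>i. 2 ^ k i \<le> q' i powr c2" and c2: "c2 > 0" and q1: "\<And>i. q' i \<ge> 1"
    and x: "x \<in> beurling_integers q'" and y: "y \<in> beurling_integers q'" and xy: "x < y"
  shows "y - x \<ge> 1 * y powr (- c2)"
proof -
  obtain a K where a: "x = real a / 2 ^ K" "2 ^ K \<le> x powr c2"
    using bohr_rep[OF qd mpos kb x] by blast
  obtain b L where b: "y = real b / 2 ^ L" "2 ^ L \<le> y powr c2"
    using bohr_rep[OF qd mpos kb y] by blast
  have x1: "x \<ge> 1" by (rule bint_ge1[OF q1 x])
  define M where "M = max K L"
  have "x * 2 ^ M = real a * 2 ^ (M - K)"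
    unfolding a(1) M_def by (simp add: field_simps power_diff)
  moreover have "y * 2 ^ M = real b * 2 ^ (M - L)"
    unfolding b(1) M_def by (simp add: field_simps power_diff)
  ultimately have "(y - x) * 2 ^ M = real (b * 2 ^ (M - L)) - real (a * 2 ^ (M - K))"
    by (simp add: algebra_simps)
  moreover have "(y - x) * 2 ^ M > 0" using xy by simp
  ultimately have "(y - x) * 2 ^ M \<ge> 1" using nat_real_gap[of "a * 2 ^ (M - K)" "b * 2 ^ (M - L)"] by linarith
  moreover have "(2::real) ^ M \<le> y powr c2"
  proof -
    have "x powr c2 \<le> y powr c2" using x1 xy c2 by (intro powr_mono2) auto
    then show ?thesis unfolding M_def using a(2) b(2) by (simp add: max_def)
  qed
  ultimately have "1 \<le> (y - x) * y powr c2"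
    using xy by (smt (verit) mult_left_mono)
  then show ?thesis using x1 xy by (simp add: powr_minus field_simps)
qed

fun Pseq :: "(nat \<Rightarrow> nat \<Rightarrow> nat \<times> nat) \<Rightarrow> nat \<Rightarrow> nat" where
  "Pseq ch 0 = 1"
| "Pseq ch (Suc n) = Pseq ch n * fst (ch n (Pseq ch n))"

lemma Pseq_prod: "Pseq ch n = (\<Prod>i<n. fst (ch i (Pseq ch i)))"
  by (induction n) auto

lemma sqrt_diff_mono:
  fixes Q q0 :: real
  assumes "1 \<le> q0" "q0 \<le> Q"
  shows "q0 - sqrt q0 \<le> Q - sqrt Q"
proof -
  define u where "u = sqrt Q"
  define v where "v = sqrt q0"
  have v1: "v \<ge> 1" unfolding v_def using assms by simp
  have uv: "u \<ge> v" unfolding u_def v_def using assms by simp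
  have "(u - v) * (u + v - 1) \<ge> 0" using uv v1 by (intro mult_nonneg_nonneg) auto
  moreover have "Q = u * u" "q0 = v * v" unfolding u_def v_def using assms by auto
  ultimately show ?thesis unfolding u_def[symmetric] v_def[symmetric] by (simp add: algebra_simps)
qed

theorem theorem1p2:
  fixes q :: "nat \<Rightarrow> real" and A :: real
  assumes "beurling_primes q" and "q 0 > 1" and "abscissa_finite q" and "A > 0"
  shows "\<exists>q'. beurling_primes q' \<and>
           (\<forall>n. \<bar>q n - q' n\<bar> \<le> q n powr (- A)) \<and>
           (\<exists>c1 > 0. \<exists>c2 > 0. \<forall>n.
              beurling_nu q' (Suc n) - beurling_nu q' n \<ge> c1 * beurling_nu q' (Suc n) powr (- c2))"
proof -
  from assms(1) have sm: "strict_mono q" and lim: "filterlim q at_top sequentially"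
    unfolding beurling_primes_def by auto
  define q0 where "q0 = q 0"
  have q0: "q0 > 1" using assms(2) by (simp add: q0_def)
  have qge: "\<And>i. q i \<ge> q0" unfolding q0_def using sm by (simp add: strict_mono_less_eq)
  obtain s Sg where s: "s > 0" and Sg: "Sg \<ge> 1" and gr: "\<And>n. real n + 2 \<le> Sg * q n powr s"
    using growth[OF sm q0 qge lim assms(3)] by blast
  have sq1: "sqrt q0 > 1" using q0 by simp
  have sqlt: "sqrt q0 < q0"
  proof -
    have "sqrt q0 * 1 < sqrt q0 * sqrt q0" using sq1 by (intro mult_strict_left_mono) auto
    then show ?thesis using q0 by simp
  qed
  define \<epsilon> where "\<epsilon> = min 1 (q0 - sqrt q0)"
  have eps: "0 < \<epsilon>" "\<epsilon> \<le> 1" unfolding \<epsilon>_def using sqlt by auto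
  obtain c2 where c2: "c2 \<ge> 1" and H: "c2/2 - A - 3 * s - 2 > 0"
      and K: "16*Sg^3*(c2/2+1)*c2/\<epsilon> < q0 powr (c2/2 - A - 3 * s - 2)"
    using choose_c2[OF q0 eps(1) Sg assms(4) s] by blast
  define lo where "lo = (\<lambda>n. q n - \<epsilon> * q n powr (-A) / (real n + 1))"
  define hi where "hi = (\<lambda>n. q n - \<epsilon> * q n powr (-A) / (real n + 2))"
  define goodf where "goodf = (\<lambda>n P (mk::nat \<times> nat).
      (\<exists>p. prime p \<and> p \<noteq> 2 \<and> p dvd fst mk \<and> \<not> p dvd P) \<and>
      lo n \<le> real (fst mk) / 2 ^ snd mk \<and> real (fst mk) / 2 ^ snd mk \<le> hi n \<and>
      2 ^ snd mk \<le> q n powr (c2/2))"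
  have qpos: "q n > 0" for n using qge[of n] q0 by linarith
  have ex: "\<exists>mk. goodf n P mk" if "P > 0" "real P \<le> q n powr (real n * (c2/2+1))" for n P
  proof -
    have "\<exists>m k. (\<exists>p. prime p \<and> p \<noteq> 2 \<and> p dvd m \<and> \<not> p dvd P) \<and>
           q n - \<epsilon> * q n powr (-A) / (real n + 1) \<le> real m / 2^k \<and>
           real m / 2^k \<le> q n - \<epsilon> * q n powr (-A) / (real n + 2) \<and>
           2^k \<le> q n powr (c2/2)"
      by (rule exist_step[of q0 "q n" \<epsilon> A s Sg c2 n P]) (use q0 qge eps assms(4) s Sg c2 gr that H K in auto)
    then obtain m k where mk: "(\<exists>p. prime p \<and> p \<noteq> 2 \<and> p dvd m \<and> \<not> p dvd P)"
        "q n - \<epsilon> * q n powr (-A) / (real n + 1) \<le> real m / 2^k"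
        "real m / 2^k \<le> q n - \<epsilon> * q n powr (-A) / (real n + 2)"
        "2^k \<le> q n powr (c2/2)"
      by blast
    show ?thesis unfolding goodf_def lo_def hi_def
      by (rule exI[of _ "(m, k)"]) (use mk in simp)
  qed
  have lo_sqrt: "lo n \<ge> sqrt (q n)" for n
  proof -
    have "q n powr (-A) \<le> 1" using qge[of n] q0 assms(4) by (intro powr_neg_le1) auto
    then have "\<epsilon> * q n powr (-A) \<le> \<epsilon>" using eps by (simp add: mult_left_le)
    moreover have "\<epsilon> * q n powr (-A) / (real n + 1) \<le> \<epsilon> * q n powr (-A)"
      using divide_left_mono[of 1 "real n + 1" "\<epsilon> * q n powr (-A)"] eps qpos[of n] by simp
    moreover have "\<epsilon> \<le> q n - sqrt (q n)"
      using sqrt_diff_mono[of q0 "q n"] qge[of n] q0 unfolding \<epsilon>_def by linarith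
    ultimately show ?thesis unfolding lo_def by linarith
  qed
  have sqq: "sqrt (q n) \<ge> sqrt q0" for n using qge[of n] by simp
  have lo_pos: "lo n > 0" for n using lo_sqrt[of n] sqq[of n] sq1 by linarith
  define ch where "ch = (\<lambda>n P. SOME mk. goodf n P mk)"
  define PP where "PP = Pseq ch"
  have PPS: "PP (Suc n) = PP n * fst (ch n (PP n))" for n unfolding PP_def by simp
  have inv: "PP n > 0 \<and> real (PP n) \<le> q n powr (real n * (c2/2+1)) \<and> goodf n (PP n) (ch n (PP n))" for n
  proof (induction n)
    case 0
    have "PP 0 = 1" unfolding PP_def by simp
    moreover have "goodf 0 1 (ch 0 1)" unfolding ch_def
      by (rule someI_ex, rule ex) (use qpos[of 0] in auto)
    ultimately show ?case using qpos[of 0] by simp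
  next
    case (Suc n)
    define P where "P = PP n"
    define m where "m = fst (ch n P)"
    define k where "k = snd (ch n P)"
    have P0: "P > 0" and Pb: "real P \<le> q n powr (real n * (c2/2+1))"
      and g: "goodf n P (ch n P)" using Suc.IH unfolding P_def by auto
    have g1: "lo n \<le> real m / 2 ^ k" and g2: "real m / 2 ^ k \<le> hi n" and g3: "2 ^ k \<le> q n powr (c2/2)"
      using g unfolding goodf_def m_def k_def by auto
    have "real m / 2 ^ k > 0" using g1 lo_pos[of n] by linarith
    then have m0: "m > 0" by (simp add: zero_less_divide_iff)
    have hq: "hi n \<le> q n" unfolding hi_def using eps qpos[of n] by simp
    have "real m = real m / 2 ^ k * 2 ^ k" by simp
    also have "\<dots> \<le> q n * q n powr (c2/2)"
      using g2 hq g3 \<open>real m / 2 ^ k > 0\<close> by (intro mult_mono) auto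
    also have "\<dots> = q n powr (c2/2+1)" using qpos[of n] by (simp add: powr_add)
    finally have mb: "real m \<le> q n powr (c2/2+1)" .
    have PS: "PP (Suc n) = P * m" unfolding PPS P_def m_def by simp
    have Ppos: "PP (Suc n) > 0" using P0 m0 PS by simp
    have "real (PP (Suc n)) = real P * real m" using PS by simp
    also have "\<dots> \<le> q n powr (real n * (c2/2+1)) * q n powr (c2/2+1)"
      using Pb mb m0 by (intro mult_mono) auto
    also have "\<dots> = q n powr (real (Suc n) * (c2/2+1))"
      unfolding powr_add[symmetric] by (rule arg_cong[where f="\<lambda>x. q n powr x"]) (simp add: algebra_simps)
    also have "\<dots> \<le> q (Suc n) powr (real (Suc n) * (c2/2+1))"
      using qpos[of n] sm c2 by (intro powr_mono2) (auto simp: strict_mono_less_eq)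
    finally have Pb': "real (PP (Suc n)) \<le> q (Suc n) powr (real (Suc n) * (c2/2+1))" .
    have "goodf (Suc n) (PP (Suc n)) (ch (Suc n) (PP (Suc n)))" unfolding ch_def
      by (rule someI_ex) (rule ex[OF Ppos Pb'])
    then show ?case using Ppos Pb' by simp
  qed
  define M where "M = (\<lambda>n. fst (ch n (PP n)))"
  define Kx where "Kx = (\<lambda>n. snd (ch n (PP n)))"
  define q' where "q' = (\<lambda>n. real (M n) / 2 ^ Kx n)"
  have gd: "goodf n (PP n) (ch n (PP n))" for n using inv by blast
  have qlo: "lo n \<le> q' n" and qhi: "q' n \<le> hi n" and kq: "2 ^ Kx n \<le> q n powr (c2/2)" for n
    using gd[of n] unfolding goodf_def q'_def M_def Kx_def by auto
  have Mpos: "M n > 0" for n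
  proof -
    have "q' n > 0" using qlo[of n] lo_pos[of n] by linarith
    then show ?thesis unfolding q'_def by (simp add: zero_less_divide_iff)
  qed
  have q'sq: "q' n \<ge> sqrt (q n)" for n using qlo[of n] lo_sqrt[of n] by linarith
  have q'1: "q' n \<ge> sqrt q0" for n using q'sq[of n] sqq[of n] sq1 by linarith
  have kb: "2 ^ Kx n \<le> q' n powr c2" for n
  proof -
    have "q n powr (c2/2) = (q n powr (1/2)) powr c2" by (simp add: powr_powr)
    also have "\<dots> = sqrt (q n) powr c2" using qpos[of n] by (simp add: powr_half_sqrt)
    also have "\<dots> \<le> q' n powr c2" using q'sq[of n] c2 qpos[of n] by (intro powr_mono2) auto
    finally show ?thesis using kq[of n] by linarith
  qed
  have priv: "\<exists>p. prime p \<and> p \<noteq> 2 \<and> p dvd M n \<and> (\<forall>i<n. \<not> p dvd M i)" for n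
  proof -
    obtain p where p: "prime p" "p \<noteq> 2" "p dvd M n" "\<not> p dvd PP n"
      using gd[of n] unfolding goodf_def M_def by auto
    have "\<forall>i<n. \<not> p dvd M i"
    proof (intro allI impI)
      fix i assume "i < n"
      have PPp: "PP n = (\<Prod>j<n. M j)" unfolding M_def PP_def by (rule Pseq_prod)
      have "M i dvd (\<Prod>j<n. M j)" by (rule dvd_prodI) (use \<open>i < n\<close> in simp_all)
      then have "M i dvd PP n" unfolding PPp .
      then show "\<not> p dvd M i" using p(4) dvd_trans[of p "M i" "PP n"] by blast
    qed
    then show ?thesis using p by blast
  qed
  have smq': "strict_mono q'"
  proof (rule strict_mono_Suc_iff[THEN iffD2], intro allI)
    fix n
    have qlt: "q n < q (Suc n)" using sm by (simp add: strict_mono_Suc_iff)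
    have "q (Suc n) powr (-A) \<le> q n powr (-A)"
      using qlt qpos[of n] assms(4) by (intro powr_mono2') auto
    then have a1: "\<epsilon> * q (Suc n) powr (-A) \<le> \<epsilon> * q n powr (-A)"
      using eps(1) by (intro mult_left_mono) simp_all
    have a2: "\<epsilon> * q (Suc n) powr (-A) / (real n + 2) \<le> \<epsilon> * q n powr (-A) / (real n + 2)"
      by (rule divide_right_mono[OF a1]) simp
    have r2: "real (Suc n) + 1 = real n + 2" by simp
    have "hi n < lo (Suc n)" unfolding hi_def lo_def r2 using qlt a2 by linarith
    then show "q' n < q' (Suc n)" using qhi[of n] qlo[of "Suc n"] by linarith
  qed
  have limq': "filterlim q' at_top sequentially"
    unfolding filterlim_at_top
  proof
    fix Z :: real
    have "eventually (\<lambda>n. Z + 1 \<le> q n) sequentially" using lim by (simp add: filterlim_at_top)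
    then show "eventually (\<lambda>n. Z \<le> q' n) sequentially"
    proof (rule eventually_mono)
      fix n assume "Z + 1 \<le> q n"
      have "q n powr (-A) \<le> 1" using qge[of n] q0 assms(4) by (intro powr_neg_le1) auto
      then have "\<epsilon> * q n powr (-A) \<le> 1" using eps by (intro mult_le_one) auto
      moreover have "\<epsilon> * q n powr (-A) / (real n + 1) \<le> \<epsilon> * q n powr (-A)"
        using divide_left_mono[of 1 "real n + 1" "\<epsilon> * q n powr (-A)"] eps qpos[of n] by simp
      ultimately have "lo n \<ge> q n - 1" unfolding lo_def by linarith
      then show "Z \<le> q' n" using qlo[of n] \<open>Z + 1 \<le> q n\<close> by linarith
    qed
  qed
  have bp: "beurling_primes q'"
    unfolding beurling_primes_def
  proof (intro conjI allI impI)
    show "strict_mono q'" by (rule smq')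
    fix n show "1 < q' n" using q'1[of n] sq1 by linarith
  next
    show "filterlim q' at_top sequentially" by (rule limq')
  next
    fix F and c :: "nat \<Rightarrow> rat"
    assume "finite F" "(\<Sum>i\<in>F. of_rat (c i) * ln (q' i)) = 0"
    then show "\<forall>i\<in>F. c i = 0"
      by (intro indep[of q' M Kx]) (auto simp: q'_def Mpos priv)
  qed
  have close: "\<bar>q n - q' n\<bar> \<le> q n powr (- A)" for n
  proof -
    have "0 \<le> \<epsilon> * q n powr (-A) / (real n + 2)" using eps by simp
    then have "q' n \<le> q n" using qhi[of n] unfolding hi_def by linarith
    moreover have "q n - q' n \<le> \<epsilon> * q n powr (-A) / (real n + 1)" using qlo[of n] unfolding lo_def by simp
    moreover have "\<epsilon> * q n powr (-A) / (real n + 1) \<le> \<epsilon> * q n powr (-A)"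
      using divide_left_mono[of 1 "real n + 1" "\<epsilon> * q n powr (-A)"] eps qpos[of n] by simp
    moreover have "\<epsilon> * q n powr (-A) \<le> q n powr (-A)" using eps by (simp add: mult_left_le_one_le)
    ultimately show ?thesis by linarith
  qed
  have nup: "strict_mono (beurling_nu q') \<and> range (beurling_nu q') = beurling_integers q'"
  proof (rule nu_props[of "sqrt q0"])
    show "1 < sqrt q0" by (rule sq1)
    fix i show "sqrt q0 \<le> q' i" using q'1[of i] by simp
  next
    show "filterlim q' at_top sequentially" by (rule limq')
    show "inj q'" using smq' by (rule strict_mono_imp_inj_on)
  qed
  have bohr: "\<forall>n. beurling_nu q' (Suc n) - beurling_nu q' n \<ge> 1 * beurling_nu q' (Suc n) powr (- c2)"
  proof
    fix n
    have x: "beurling_nu q' n \<in> beurling_integers q'" and y: "beurling_nu q' (Suc n) \<in> beurling_integers q'"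
      using nup by auto
    have xy: "beurling_nu q' n < beurling_nu q' (Suc n)" using nup by (simp add: strict_mono_Suc_iff)
    have q'ge1: "q' i \<ge> 1" for i using q'1[of i] sq1 by linarith
    show "beurling_nu q' (Suc n) - beurling_nu q' n \<ge> 1 * beurling_nu q' (Suc n) powr (- c2)"
      by (rule bohr_gap[of q' M Kx c2, OF _ Mpos kb _ q'ge1 x y xy]) (use c2 in \<open>auto simp: q'_def\<close>)
  qed
  have c20: "c2 > 0" using c2 by simp
  have b2: "\<exists>c1 > 0. \<exists>c2 > 0. \<forall>n.
              beurling_nu q' (Suc n) - beurling_nu q' n \<ge> c1 * beurling_nu q' (Suc n) powr (- c2)"
  proof (rule exI[of _ "1::real"], rule conjI)
    show "(1::real) > 0" by simp
    show "\<exists>c2 > 0. \<forall>n. beurling_nu q' (Suc n) - beurling_nu q' n \<ge> 1 * beurling_nu q' (Suc n) powr (- c2)"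
      using c20 bohr by blast
  qed
  show ?thesis using bp close b2 by blast
qed

end
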